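(* Let $n\ge2$, $\alpha\in[0,\pi/2)$, $A,B\in\Pi_{s,\alpha}^n$, $q\in\mathbb{C}$ with $0<|q|\le1$, and $0<t<1$. Then (a) $|q|^2\,w_q(\mathcal{L}(A,B))\le\sec^3(\alpha)\,\mathcal{L}(w_q(A),w_q(B))$; (b) $|q|^2\,w_q(\mathcal{H}_t(A,B))\le\sec^3(\alpha)\,\mathcal{H}_t(w_q(A),w_q(B))$.
   Context: For $\alpha\in[0,\pi/2)$, $S_\alpha=\{z\in\mathbb{C}:\operatorname{Re}z>0,\ |\operatorname{Im}z|\le\tan(\alpha)\operatorname{Re}z\}$, and $\Pi_{s,\alpha}^n$ is the set of $n\times n$ complex matrices whose numerical range is contained in $S_\alpha$. For accretive $X,Y$ and $s\in(0,1)$, the weighted geometric mean is $X\#_sY=\frac{\sin(s\pi)}{\pi}\int_0^\infty \lambda^{s-1}(X^{-1}+\lambda Y^{-1})^{-1}d\lambda$ (for positive scalars $a\#_sb=a^{1-s}b^s$). The logarithmic mean is $\mathcal{L}(X,Y)=\int_0^1X\#_sY\,ds$ and the Heinz mean is $\mathcal{H}_t(X,Y)=\frac{X\#_tY+X\#_{1-t}Y}{2}$; for positive scalars $\mathcal{L}(a,b)=\int_0^1a^{1-s}b^s\,ds$ and $\mathcal{H}_t(a,b)=\frac{a^{1-t}b^t+a^tb^{1-t}}{2}$. $w_q(X)=\sup\{|\langle Xx,y\rangle|:\|x\|=\|y\|=1,\ \langle x,y\rangle=q\}$. *)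

theory Defs
  imports "HOL-Analysis.Analysis"
begin

definition cinner :: "complex^'n \<Rightarrow> complex^'n \<Rightarrow> complex" where
  "cinner x y = (\<Sum>i\<in>UNIV. x $ i * cnj (y $ i))"

definition numerical_range :: "complex^'n^'n \<Rightarrow> complex set" where
  "numerical_range X = {cinner (X *v x) x | x. norm x = 1}"

definition sector :: "real \<Rightarrow> complex set" where
  "sector \<alpha> = {z. Re z > 0 \<and> \<bar>Im z\<bar> \<le> tan \<alpha> * Re z}"

definition Pi_sa :: "real \<Rightarrow> (complex^'n^'n) set" where
  "Pi_sa \<alpha> = {X. numerical_range X \<subseteq> sector \<alpha>}"

text \<open>Weighted geometric mean of accretive matrices (integral representation).\<close>
definition wgmean :: "real \<Rightarrow> complex^'n^'n \<Rightarrow> complex^'n^'n \<Rightarrow> complex^'n^'n" where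
  "wgmean s X Y = (sin (s * pi) / pi) *\<^sub>R
     integral {0<..} (\<lambda>l::real. (l powr (s - 1)) *\<^sub>R
        matrix_inv (matrix_inv X + l *\<^sub>R matrix_inv Y))"

definition log_mean :: "complex^'n^'n \<Rightarrow> complex^'n^'n \<Rightarrow> complex^'n^'n" where
  "log_mean X Y = integral {0..1} (\<lambda>s. wgmean s X Y)"

definition heinz_mean :: "real \<Rightarrow> complex^'n^'n \<Rightarrow> complex^'n^'n \<Rightarrow> complex^'n^'n" where
  "heinz_mean t X Y = (1/2::real) *\<^sub>R (wgmean t X Y + wgmean (1 - t) X Y)"

definition log_mean_real :: "real \<Rightarrow> real \<Rightarrow> real" where
  "log_mean_real a b = integral {0..1} (\<lambda>s. a powr (1 - s) * b powr s)"

definition heinz_mean_real :: "real \<Rightarrow> real \<Rightarrow> real \<Rightarrow> real" where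
  "heinz_mean_real t a b = (a powr (1 - t) * b powr t + a powr t * b powr (1 - t)) / 2"

definition q_numrad :: "complex \<Rightarrow> complex^'n^'n \<Rightarrow> real" where
  "q_numrad q X = Sup {cmod (cinner (X *v x) y) | x y. norm x = 1 \<and> norm y = 1 \<and> cinner x y = q}"

end

theory Submission
  imports Defs
begin

lemma Beta_refl:
  assumes "0 < s" "s < 1"
  shows "Beta s (1 - s) = pi / sin (pi * s)"
proof -
  have "Gamma (complex_of_real s) * Gamma (1 - complex_of_real s) = of_real pi / sin (of_real pi * of_real s)"
    by (rule Gamma_reflection_complex)
  hence "complex_of_real (Gamma s * Gamma (1 - s)) = complex_of_real (pi / sin (pi * s))"
    by (metis Gamma_complex_of_real of_real_1 of_real_diff of_real_mult sin_of_real of_real_divide)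
  hence "Gamma s * Gamma (1 - s) = pi / sin (pi * s)" by (simp only: of_real_eq_iff)
  thus ?thesis by (simp add: Beta_altdef)
qed

lemma powr_mult_self: "(x::real) > 0 \<Longrightarrow> x powr a * x = x powr (a + 1)"
  by (simp add: powr_add)

lemma alg_aux:
  fixes U w V P T c k :: real
  assumes "U > 0" "w > 0" "V * (U * w) = 1"
  shows "P * T / U * (c * w) * (k / w^2) = (P * k) * c * (T * V)"
proof -
  have "V = 1 / (U * w)" using assms by (simp add: field_simps)
  thus ?thesis using assms by (simp add: field_simps power2_eq_square)
qed

lemma key_integral:
  fixes s c d :: real
  assumes s0: "0 < s" and s1: "s < 1" and c0: "0 < c" and d0: "0 < d"
  shows "((\<lambda>l. l powr (s - 1) * (c * d / (d + l * c))) has_integral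
           (pi / sin (s * pi) * (c powr (1 - s) * d powr s))) {0<..}"
proof -
  define k where "k = d / c"
  have k0: "k > 0" using c0 d0 by (simp add: k_def)
  define g where "g t = k * t / (1 - t)" for t :: real
  define g' where "g' t = k / (1 - t)^2" for t :: real
  define f where "f l = l powr (s - 1) * (c * d / (d + l * c))" for l :: real
  define be where "be t = t powr (s - 1) * (1 - t) powr ((1 - s) - 1)" for t :: real
  have fg: "f (g t) * g' t = (k powr s * c) * be t" if "0 < t" "t < 1" for t
  proof -
    have t1: "1 - t > 0" using that by simp
    have "g t powr (s - 1) = k powr (s - 1) * t powr (s - 1) / (1 - t) powr (s - 1)"
      unfolding g_def using that k0 by (simp add: powr_divide powr_mult)
    moreover have "c * d / (d + g t * c) = c * (1 - t)"
      unfolding g_def k_def using that c0 d0 t1 by (simp add: field_simps)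
    moreover have "k powr s = k powr (s - 1) * k"
      using powr_mult_self[OF k0, of "s - 1"] by simp
    moreover have "(1 - t) powr (- s) * ((1 - t) powr (s - 1) * (1 - t)) = 1"
    proof -
      have "(1 - t) powr (s - 1) * (1 - t) = (1 - t) powr s"
        using powr_mult_self[OF t1, of "s - 1"] by simp
      thus ?thesis using t1 by (simp add: powr_minus)
    qed
    moreover have "(1 - t) powr (s - 1) > 0" using t1 by auto
    ultimately show ?thesis
      unfolding f_def be_def g'_def using t1 alg_aux[of "(1 - t) powr (s - 1)" "1 - t" "(1 - t) powr (- s)"
         "k powr (s - 1)" "t powr (s - 1)" c k]
      by simp
  qed
  have Ibe: "set_integrable lborel {0..1} be"
    unfolding be_def using integrable_Beta[of s "1 - s"] s0 s1 by simp
  have Ibe': "set_integrable lborel (einterval 0 1) be"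
    by (rule set_integrable_subset[OF Ibe]) (auto simp: einterval_def zero_ereal_def one_ereal_def)
  have Ifg: "set_integrable lborel (einterval 0 1) (\<lambda>x. f (g x) * g' x)"
  proof -
    have "set_integrable lborel (einterval 0 1) (\<lambda>x. (k powr s * c) * be x)"
      using Ibe' by (rule set_integrable_mult_right)
    thus ?thesis
      by (rule iffD1[OF set_integrable_cong, rotated 3])
         (auto simp: einterval_def zero_ereal_def one_ereal_def fg)
  qed
  have deriv: "DERIV g x :> g' x" if "0 < x" "x < 1" for x
    unfolding g_def g'_def using that
    by (auto intro!: derivative_eq_intros simp: field_simps power2_eq_square)
  have sub: "set_integrable lborel (einterval 0 \<infinity>) f"
       "(LBINT x=0..\<infinity>. f x) = (LBINT x=0..1. f (g x) * g' x)"
  proof -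
    have A: "((ereal \<circ> g \<circ> real_of_ereal) \<longlongrightarrow> 0) (at_right 0)"
    proof -
      have "(g \<longlongrightarrow> g 0) (at_right 0)" unfolding g_def
        by (intro tendsto_intros) auto
      hence "(g \<longlongrightarrow> 0) (at_right 0)" by (simp add: g_def)
      thus ?thesis by (simp add: zero_ereal_def ereal_tendsto_simps)
    qed
    have B: "((ereal \<circ> g \<circ> real_of_ereal) \<longlongrightarrow> \<infinity>) (at_left 1)"
    proof -
      have "LIM x at_left (1::real). k * x / (1 - x) :> at_top"
      proof -
        have l1: "((\<lambda>x::real. k * x) \<longlongrightarrow> k) (at_left 1)"
          by (intro tendsto_eq_intros) auto
        have l2: "((\<lambda>x::real. 1 - x) \<longlongrightarrow> 0) (at_left 1)"
          by (intro tendsto_eq_intros) auto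
        have l3: "eventually (\<lambda>x::real. 0 < 1 - x) (at_left 1)"
          using eventually_at_left_real[of 0 "1::real"] by (auto elim: eventually_mono)
        show ?thesis by (rule LIM_at_top_divide[OF l1 k0 l2 l3])
      qed
      thus ?thesis by (simp add: one_ereal_def ereal_tendsto_simps g_def)
    qed
    have gpos: "g x > 0" if "0 < x" "x < 1" for x
      unfolding g_def using that k0 by simp
      have p1: "(0::ereal) < 1" by simp
      have p2: "DERIV g x :> g' x" if "0 < ereal x" "ereal x < 1" for x
        using that deriv by (simp add: zero_ereal_def one_ereal_def)
      have p3: "isCont f (g x)" if "0 < ereal x" "ereal x < 1" for x
      proof -
        have "g x > 0" using that gpos by (simp add: zero_ereal_def one_ereal_def)
        moreover have "d + g x * c > 0" using \<open>g x > 0\<close> c0 d0 by (simp add: add_pos_pos)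
        ultimately show ?thesis unfolding f_def
          by (auto intro!: continuous_intros)
      qed
      have p4: "isCont g' x" if "0 < ereal x" "ereal x < 1" for x
        using that unfolding g'_def by (auto intro!: continuous_intros simp: zero_ereal_def one_ereal_def)
      have p5: "0 \<le> f (g x)" if "0 < ereal x" "ereal x < 1" for x
      proof -
        have "g x > 0" using that gpos by (simp add: zero_ereal_def one_ereal_def)
        thus ?thesis unfolding f_def using c0 d0 by (simp add: add_pos_pos)
      qed
      have p6: "0 \<le> g' x" if "0 \<le> ereal x" "ereal x \<le> 1" for x
        unfolding g'_def using k0 by simp
    show "set_integrable lborel (einterval 0 \<infinity>) f"
         "(LBINT x=0..\<infinity>. f x) = (LBINT x=0..1. f (g x) * g' x)"
      using interval_integral_substitution_nonneg[OF p1 p2 p3 p4 p5 p6 A B Ifg] by auto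
  qed
  have E0: "einterval 0 \<infinity> = {0::real<..}" by (simp add: zero_ereal_def)
  have E1: "einterval 0 1 = {0::real<..<1}" by (simp add: zero_ereal_def one_ereal_def)
  have If: "set_integrable lborel {0<..} f" using sub(1) E0 by simp
  have fint: "f integrable_on {0<..}" and fval: "(LINT x:{0<..}|lborel. f x) = integral {0<..} f"
    using set_borel_integral_eq_integral[OF If] by auto
  have Ifg': "set_integrable lborel {0<..<1} (\<lambda>x. f (g x) * g' x)" using Ifg E1 by simp
  have fgval: "(LINT x:{0<..<1}|lborel. f (g x) * g' x) = integral {0<..<1} (\<lambda>x. f (g x) * g' x)"
    using set_borel_integral_eq_integral[OF Ifg'] by auto
  have "(LBINT x=0..\<infinity>. f x) = (LINT x:{0<..}|lborel. f x)"
    using interval_integral_Ioi[of 0 f] by (simp add: zero_ereal_def)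
  moreover have "(LBINT x=0..1. f (g x) * g' x) = (LINT x:{0<..<1}|lborel. f (g x) * g' x)"
    using interval_integral_Ioo[of 0 1 "\<lambda>x. f (g x) * g' x"] by (simp add: zero_ereal_def one_ereal_def)
  ultimately have eq1: "integral {0<..} f = integral {0<..<1} (\<lambda>x. f (g x) * g' x)"
    using sub(2) fval fgval by simp
  have "integral {0<..<1} (\<lambda>x. f (g x) * g' x) = integral {0<..<1} (\<lambda>x. (k powr s * c) * be x)"
    by (rule integral_cong) (auto simp: fg)
  also have "\<dots> = (k powr s * c) * integral {0<..<1} be" by simp
  also have "integral {0<..<1} be = integral {0..1} be" by (simp add: integral_open_interval_real)
  also have "integral {0..1} be = Beta s (1 - s)"
    unfolding be_def using has_integral_Beta_real[of s "1 - s"] s0 s1 by (simp add: integral_unique)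
  also have "Beta s (1 - s) = pi / sin (s * pi)" using Beta_refl[OF s0 s1] by (simp add: mult.commute)
  also have "k powr s * c = c powr (1 - s) * d powr s"
    unfolding k_def using c0 d0 by (simp add: powr_divide powr_diff)
  finally have "integral {0<..} f = pi / sin (s * pi) * (c powr (1 - s) * d powr s)"
    using eq1 by simp
  with fint show ?thesis unfolding f_def[abs_def] by (metis integrable_integral)
qed

lemma cinner_add_left: "cinner (x + y) z = cinner x z + cinner y z"
  unfolding cinner_def by (simp add: sum.distrib ring_distribs)
lemma cinner_add_right: "cinner x (y + z) = cinner x y + cinner x z"
  unfolding cinner_def by (simp add: sum.distrib ring_distribs)
lemma cinner_diff_left: "cinner (x - y) z = cinner x z - cinner y z"
  unfolding cinner_def by (simp add: sum_subtractf ring_distribs)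
lemma cinner_diff_right: "cinner x (y - z) = cinner x y - cinner x z"
  unfolding cinner_def by (simp add: sum_subtractf ring_distribs)
lemma cinner_scale_left: "cinner (c *s x) y = c * cinner x y"
  unfolding cinner_def by (simp add: sum_distrib_left mult.assoc)
lemma cinner_scale_right: "cinner x (c *s y) = cnj c * cinner x y"
  unfolding cinner_def by (simp add: sum_distrib_left mult_ac)
lemma scaleR_as_scale: "r *\<^sub>R (x::complex^'n) = complex_of_real r *s x"
  unfolding vec_eq_iff vector_scaleR_component vector_scalar_mult_def by (simp add: scaleR_conv_of_real)
lemma cinner_scaleR_left: "cinner (r *\<^sub>R x) y = of_real r * cinner x y"
  unfolding scaleR_as_scale by (rule cinner_scale_left)
lemma mult_cnj_self1: "z * cnj z = (complex_of_real (cmod z))^2"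
  using complex_norm_square[of z] by simp
lemma mult_cnj_self2: "cnj z * z = (complex_of_real (cmod z))^2"
  using complex_norm_square[of z] by (simp add: mult.commute)
lemma cinner_commute: "cnj (cinner x y) = cinner y x"
  unfolding cinner_def by (simp add: mult.commute)
lemma cinner_zero_left [simp]: "cinner 0 y = 0"
  unfolding cinner_def by simp
lemma cinner_zero_right [simp]: "cinner x 0 = 0"
  unfolding cinner_def by simp

lemma norm_sq_vec: "(norm (x::complex^'n))^2 = (\<Sum>i\<in>UNIV. (cmod (x$i))^2)"
  unfolding norm_vec_def L2_set_def by (simp add: sum_nonneg)

lemma cinner_self: "cinner x x = complex_of_real ((norm x)^2)"
  unfolding cinner_def norm_sq_vec by (simp add: mult_cnj_self1)

lemma cinner_self_Re: "Re (cinner x x) = (norm x)^2"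
  by (simp add: cinner_self)

lemma cinner_cs: "cmod (cinner x y) \<le> norm x * norm y"
proof -
  have "cmod (cinner x y) \<le> (\<Sum>i\<in>UNIV. cmod (x$i * cnj (y$i)))"
    unfolding cinner_def by (rule norm_sum)
  also have "\<dots> = (\<Sum>i\<in>UNIV. \<bar>cmod (x$i)\<bar> * \<bar>cmod (y$i)\<bar>)"
    by (simp add: norm_mult)
  also have "\<dots> \<le> L2_set (\<lambda>i. cmod (x$i)) UNIV * L2_set (\<lambda>i. cmod (y$i)) UNIV"
    by (rule L2_set_mult_ineq)
  also have "\<dots> = norm x * norm y" by (simp add: norm_vec_def)
  finally show ?thesis .
qed

lemma norm_scale_vec: "norm (c *s (x::complex^'n)) = cmod c * norm x"
proof -
  have "(norm (c *s x))^2 = (cmod c * norm x)^2"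
    unfolding norm_sq_vec power_mult_distrib by (simp add: norm_mult power_mult_distrib sum_distrib_left)
  thus ?thesis by (simp add: power2_eq_iff_nonneg)
qed

lemma mv_scale: "M *v (c *s x) = c *s (M *v (x::complex^'n))"
  by (simp add: vec_eq_iff matrix_vector_mult_def sum_distrib_left mult_ac)

lemma mv_scaleR: "M *v (r *\<^sub>R x) = r *\<^sub>R (M *v (x::complex^'n))"
  unfolding scaleR_as_scale by (rule mv_scale)

lemma scaleR_mv: "(r *\<^sub>R M) *v x = r *\<^sub>R (M *v (x::complex^'n))"
  by (simp add: vec_eq_iff matrix_vector_mult_def scaleR_sum_right)


definition sesq :: "(complex^'n \<Rightarrow> complex^'n \<Rightarrow> complex) \<Rightarrow> bool" where
  "sesq g \<longleftrightarrow> (\<forall>x y z. g (x - y) z = g x z - g y z) \<and> (\<forall>x y z. g x (y - z) = g x y - g x z)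
     \<and> (\<forall>c x y. g (c *s x) y = c * g x y) \<and> (\<forall>c x y. g x (c *s y) = cnj c * g x y)"

lemma sesq_matrix: "sesq (\<lambda>u v. cinner (A *v u) v)"
  unfolding sesq_def
  by (simp add: matrix_vector_mult_diff_distrib cinner_diff_left cinner_diff_right mv_scale
      cinner_scale_left cinner_scale_right)

lemma sesq_comb:
  assumes "sesq g" shows "sesq (\<lambda>u v. a * g u v + b * cnj (g v u))"
proof -
  have d1: "\<And>x y z. g (x - y) z = g x z - g y z" and d2: "\<And>x y z. g x (y - z) = g x y - g x z"
    and s1: "\<And>c x y. g (c *s x) y = c * g x y" and s2: "\<And>c x y. g x (c *s y) = cnj c * g x y"
    using assms unfolding sesq_def by blast+
  show ?thesis unfolding sesq_def
    by (intro conjI allI; simp only: d1 d2 s1 s2 complex_cnj_diff complex_cnj_mult complex_cnj_cnj;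
        simp add: algebra_simps)
qed

lemma sesq_expand:
  assumes "sesq g"
  shows "g (u - t *s v) (u - t *s v) = g u u - cnj t * g u v - t * g v u + t * cnj t * g v v"
proof -
  have d1: "\<And>x y z. g (x - y) z = g x z - g y z" and d2: "\<And>x y z. g x (y - z) = g x y - g x z"
    and s1: "\<And>c x y. g (c *s x) y = c * g x y" and s2: "\<And>c x y. g x (c *s y) = cnj c * g x y"
    using assms unfolding sesq_def by blast+
  show ?thesis by (simp only: d1 d2 s1 s2; simp add: algebra_simps)
qed

lemma psd_cs:
  assumes sg: "sesq g" and herm: "\<And>u v. g v u = cnj (g u v)" and psd: "\<And>x. Re (g x x) \<ge> 0"
  shows "(cmod (g u v))^2 \<le> Re (g u u) * Re (g v v)"
proof -
  define z where "z = g u v"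
  have real: "g x x = complex_of_real (Re (g x x))" for x
    using herm[of x x] by (simp add: complex_eq_iff)
  have quad: "0 \<le> Re (g u u) - 2 * l * (cmod z)^2 + l^2 * (cmod z)^2 * Re (g v v)" for l :: real
  proof -
    define t where "t = complex_of_real l * z"
    have "0 \<le> Re (g (u - t *s v) (u - t *s v))" by (rule psd)
    also have "g (u - t *s v) (u - t *s v) = g u u - cnj t * z - t * cnj z + t * cnj t * g v v"
      using sesq_expand[OF sg] herm[of u v] by (simp add: z_def)
    also have "Re \<dots> = Re (g u u) - 2 * l * (cmod z)^2 + l^2 * (cmod z)^2 * Re (g v v)"
    proof -
      have "cnj t * z = complex_of_real (l * (cmod z)^2)" unfolding t_def
        by (simp add: mult_cnj_self1 mult_cnj_self2 mult_ac)
      moreover have "t * cnj z = complex_of_real (l * (cmod z)^2)" unfolding t_def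
        by (simp add: mult_cnj_self1 mult_cnj_self2 mult_ac)
      moreover have "t * cnj t = complex_of_real (l^2 * (cmod z)^2)" unfolding t_def
        by (simp add: mult_cnj_self1 mult_cnj_self2 mult_ac power2_eq_square)
      ultimately show ?thesis
        by (subst real[of v]) (simp add: power2_eq_square)
    qed
    finally show ?thesis .
  qed
  show ?thesis
  proof (cases "z = 0")
    case True thus ?thesis using psd[of u] psd[of v] by (simp add: z_def)
  next
    case False
    hence zp: "(cmod z)^2 > 0" by simp
    show ?thesis
    proof (cases "Re (g v v) = 0")
      case True
      have "0 \<le> Re (g u u) - 2 * ((Re (g u u) + 1) / (2 * (cmod z)^2)) * (cmod z)^2"
        using quad[of "(Re (g u u) + 1) / (2 * (cmod z)^2)"] True by simp
      also have "\<dots> = -1" using zp by (simp add: field_simps)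
      finally show ?thesis by simp
    next
      case False
      hence vp: "Re (g v v) > 0" using psd[of v] by simp
      have "0 \<le> Re (g u u) - 2 * (1 / Re (g v v)) * (cmod z)^2 + (1 / Re (g v v))^2 * (cmod z)^2 * Re (g v v)"
        by (rule quad)
      also have "\<dots> = Re (g u u) - (cmod z)^2 / Re (g v v)"
        using vp by (simp add: field_simps power2_eq_square)
      finally have "(cmod z)^2 / Re (g v v) \<le> Re (g u u)" by simp
      thus ?thesis using vp by (simp add: z_def field_simps)
    qed
  qed
qed

lemma cinner_scaleR_right: "cinner x (r *\<^sub>R y) = of_real r * cinner x y"
  unfolding scaleR_as_scale by (simp add: cinner_scale_right)

lemma sector_form:
  assumes A: "A \<in> Pi_sa \<alpha>"
  shows "Re (cinner (A *v x) x) \<ge> 0"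
    and "\<bar>Im (cinner (A *v x) x)\<bar> \<le> tan \<alpha> * Re (cinner (A *v x) x)"
    and "x \<noteq> 0 \<Longrightarrow> Re (cinner (A *v x) x) > 0"
proof -
  have main: "Re (cinner (A *v x) x) > 0 \<and> \<bar>Im (cinner (A *v x) x)\<bar> \<le> tan \<alpha> * Re (cinner (A *v x) x)"
    if nz: "x \<noteq> 0" for x
  proof -
    define r where "r = 1 / norm x"
    have r0: "r > 0" using nz by (simp add: r_def)
    define x' where "x' = r *\<^sub>R x"
    have "norm x' = 1" using nz by (simp add: x'_def r_def)
    hence "cinner (A *v x') x' \<in> numerical_range A" unfolding numerical_range_def by blast
    hence "cinner (A *v x') x' \<in> sector \<alpha>" using A unfolding Pi_sa_def by blast
    moreover have "cinner (A *v x') x' = of_real (r * r) * cinner (A *v x) x"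
      unfolding x'_def by (simp add: mv_scaleR cinner_scaleR_left cinner_scaleR_right)
    ultimately have "r * r * Re (cinner (A *v x) x) > 0 \<and>
        r * r * \<bar>Im (cinner (A *v x) x)\<bar> \<le> tan \<alpha> * (r * r * Re (cinner (A *v x) x))"
      unfolding sector_def by (simp add: abs_mult)
    moreover have "r * r > 0" using r0 by simp
    ultimately show ?thesis
      by (metis (no_types, opaque_lifting) mult.left_commute mult_le_cancel_left_pos zero_less_mult_pos)
  qed
  show "Re (cinner (A *v x) x) \<ge> 0"
    using main[of x] by (cases "x = 0") auto
  show "\<bar>Im (cinner (A *v x) x)\<bar> \<le> tan \<alpha> * Re (cinner (A *v x) x)"
    using main[of x] by (cases "x = 0") auto
  show "x \<noteq> 0 \<Longrightarrow> Re (cinner (A *v x) x) > 0" using main[of x] by auto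
qed

lemma cs2:
  fixes X Y p1 p2 q1 q2 :: real
  assumes "0 \<le> X" "0 \<le> Y" "0 \<le> p1" "0 \<le> p2" "0 \<le> q1" "0 \<le> q2"
    and "X^2 \<le> p1 * q1" "Y^2 \<le> p2 * q2"
  shows "(X + Y)^2 \<le> (p1 + p2) * (q1 + q2)"
proof -
  define a1 b1 a2 b2 where "a1 = sqrt p1" "b1 = sqrt q1" "a2 = sqrt p2" "b2 = sqrt q2"
  have X: "X \<le> a1 * b1" unfolding a1_b1_a2_b2_def
    using assms real_le_rsqrt[of X "p1 * q1"] by (simp add: real_sqrt_mult)
  have Y: "Y \<le> a2 * b2" unfolding a1_b1_a2_b2_def
    using assms real_le_rsqrt[of Y "p2 * q2"] by (simp add: real_sqrt_mult)
  have "(X + Y)^2 \<le> (a1 * b1 + a2 * b2)^2"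
    using X Y assms by (intro power_mono) auto
  also have "\<dots> \<le> (a1^2 + a2^2) * (b1^2 + b2^2)"
  proof -
    have "(a1^2 + a2^2) * (b1^2 + b2^2) - (a1 * b1 + a2 * b2)^2 = (a1 * b2 - a2 * b1)^2"
      by (simp add: power2_eq_square algebra_simps)
    moreover have "(a1 * b2 - a2 * b1)^2 \<ge> 0" by simp
    ultimately show ?thesis by linarith
  qed
  also have "\<dots> = (p1 + p2) * (q1 + q2)" unfolding a1_b1_a2_b2_def using assms by simp
  finally show ?thesis .
qed

lemma sec_sq: fixes \<alpha> :: real assumes "cos \<alpha> > 0" shows "1 + (tan \<alpha>)^2 = (1 / cos \<alpha>)^2"
proof -
  have sc: "(sin \<alpha>)^2 + (cos \<alpha>)^2 = 1" by (rule sin_cos_squared_add)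
  have "sin \<alpha> * sin \<alpha> = 1 - cos \<alpha> * cos \<alpha>" using sc[unfolded power2_eq_square] by linarith
  thus ?thesis using assms by (simp add: tan_def field_simps power2_eq_square)
qed

lemma sector_cs:
  assumes A: "A \<in> Pi_sa \<alpha>" and a0: "0 \<le> \<alpha>" and a1: "\<alpha> < pi / 2"
  shows "(cmod (cinner (A *v u) v))^2 \<le> (1 / cos \<alpha>)^2 * (Re (cinner (A *v u) u) * Re (cinner (A *v v) v))"
proof -
  define a where "a = (\<lambda>u v. cinner (A *v u) v)"
  define \<tau> where "\<tau> = tan \<alpha>"
  have cpos: "cos \<alpha> > 0" using a0 a1 by (intro cos_gt_zero_pi) auto
  have tau0: "\<tau> \<ge> 0" unfolding \<tau>_def using a0 a1 cpos sin_ge_zero[of \<alpha>] by (simp add: tan_def)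
  have sa: "sesq a" unfolding a_def by (rule sesq_matrix)
  have hu: "Re (a x x) \<ge> 0" for x unfolding a_def using sector_form(1)[OF A] .
  have imb: "\<bar>Im (a x x)\<bar> \<le> \<tau> * Re (a x x)" for x unfolding a_def \<tau>_def using sector_form(2)[OF A] .
  have sec1: "(1 / cos \<alpha>)^2 \<ge> 1"
  proof -
    have "cos \<alpha> \<le> 1" by simp
    hence "1 / cos \<alpha> \<ge> 1" using cpos by (simp add: field_simps)
    thus ?thesis by (simp add: one_le_power)
  qed
  define H where "H = (\<lambda>u v. (1/2) * a u v + (1/2) * cnj (a v u))"
  have sH: "sesq H" unfolding H_def by (rule sesq_comb[OF sa])
  have hH: "H v u = cnj (H u v)" for u v unfolding H_def by simp
  have ReH: "Re (H x x) = Re (a x x)" for x unfolding H_def by simp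
  show ?thesis
  proof (cases "\<tau> = 0")
    case True
    define K where "K = (\<lambda>u v. (-\<i>/2) * a u v + (\<i>/2) * cnj (a v u))"
    have sK: "sesq K" unfolding K_def by (rule sesq_comb[OF sa])
    have hK: "K v u = cnj (K u v)" for u v unfolding K_def by simp
    have ReK: "Re (K x x) = Im (a x x)" for x unfolding K_def by simp
    have Im0: "Im (a x x) = 0" for x using imb[of x] True by simp
    have K0: "K u v = 0"
      using psd_cs[OF sK hK, of u v] ReK Im0 by simp
    have "a u v = H u v + \<i> * K u v" unfolding H_def K_def by (simp add: algebra_simps)
    hence "a u v = H u v" using K0 by simp
    hence "(cmod (a u v))^2 \<le> Re (a u u) * Re (a v v)"
      using psd_cs[OF sH hH, of u v] ReH hu by simp
    also have "\<dots> \<le> (1 / cos \<alpha>)^2 * (Re (a u u) * Re (a v v))"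
      using mult_right_mono[OF sec1, of "Re (a u u) * Re (a v v)"] hu[of u] hu[of v] by simp
    finally show ?thesis unfolding a_def .
  next
    case False
    hence tp: "\<tau> > 0" using tau0 by simp
    define P where "P = (\<lambda>u v. (of_real \<tau>/2 + \<i>/2) * a u v + (of_real \<tau>/2 - \<i>/2) * cnj (a v u))"
    define N where "N = (\<lambda>u v. (of_real \<tau>/2 - \<i>/2) * a u v + (of_real \<tau>/2 + \<i>/2) * cnj (a v u))"
    have sP: "sesq P" unfolding P_def by (rule sesq_comb[OF sa])
    have sN: "sesq N" unfolding N_def by (rule sesq_comb[OF sa])
    have hP: "P v u = cnj (P u v)" for u v unfolding P_def by (simp add: algebra_simps)
    have hN: "N v u = cnj (N u v)" for u v unfolding N_def by (simp add: algebra_simps)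
    have ReP: "Re (P x x) = \<tau> * Re (a x x) - Im (a x x)" for x unfolding P_def by simp
    have ReN: "Re (N x x) = \<tau> * Re (a x x) + Im (a x x)" for x unfolding N_def by simp
    have pP: "Re (P x x) \<ge> 0" for x using ReP[of x] imb[of x] by linarith
    have pN: "Re (N x x) \<ge> 0" for x using ReN[of x] imb[of x] by linarith
    define c1 where "c1 = 1 / (2 * of_real \<tau>) - \<i>/2"
    define c2 where "c2 = 1 / (2 * of_real \<tau>) + \<i>/2"
    have e1: "c1 * (of_real \<tau>/2 + \<i>/2) + c2 * (of_real \<tau>/2 - \<i>/2) = 1"
      unfolding c1_def c2_def using tp by (simp add: field_simps complex_eq_iff)
    have e2: "c1 * (of_real \<tau>/2 - \<i>/2) + c2 * (of_real \<tau>/2 + \<i>/2) = 0"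
      unfolding c1_def c2_def using tp by (simp add: field_simps complex_eq_iff)
    have decomp: "a u v = c1 * P u v + c2 * N u v"
    proof -
      have "c1 * P u v + c2 * N u v =
          (c1 * (of_real \<tau>/2 + \<i>/2) + c2 * (of_real \<tau>/2 - \<i>/2)) * a u v
          + (c1 * (of_real \<tau>/2 - \<i>/2) + c2 * (of_real \<tau>/2 + \<i>/2)) * cnj (a v u)"
        unfolding P_def N_def by (simp add: algebra_simps)
      thus ?thesis using e1 e2 by simp
    qed
    have nc: "(cmod c1)^2 = (1 + \<tau>^2) / (4 * \<tau>^2)" "(cmod c2)^2 = (1 + \<tau>^2) / (4 * \<tau>^2)"
      unfolding c1_def c2_def cmod_power2 using tp by (simp_all add: field_simps power2_eq_square)
    hence nc': "cmod c2 = cmod c1" by (metis norm_ge_zero power2_eq_iff_nonneg)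
    have "cmod (a u v) \<le> cmod c1 * (cmod (P u v) + cmod (N u v))"
      using decomp norm_triangle_ineq[of "c1 * P u v" "c2 * N u v"] nc'
      by (simp add: norm_mult distrib_left)
    hence "(cmod (a u v))^2 \<le> (cmod c1 * (cmod (P u v) + cmod (N u v)))^2"
      by (intro power_mono) auto
    also have "\<dots> = (cmod c1)^2 * (cmod (P u v) + cmod (N u v))^2" by (simp add: power_mult_distrib)
    also have "\<dots> \<le> (cmod c1)^2 * ((Re (P u u) + Re (N u u)) * (Re (P v v) + Re (N v v)))"
      by (intro mult_left_mono cs2 psd_cs[OF sP hP] psd_cs[OF sN hN] pP pN) auto
    also have "(Re (P u u) + Re (N u u)) * (Re (P v v) + Re (N v v)) = 4 * \<tau>^2 * (Re (a u u) * Re (a v v))"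
    proof -
      have sPN: "Re (P x x) + Re (N x x) = 2 * \<tau> * Re (a x x)" for x using ReP[of x] ReN[of x] by simp
      show ?thesis by (simp only: sPN) (simp add: power2_eq_square algebra_simps)
    qed
    also have "(cmod c1)^2 * (4 * \<tau>^2 * (Re (a u u) * Re (a v v))) = (1 + \<tau>^2) * (Re (a u u) * Re (a v v))"
      using nc tp by (simp add: field_simps)
    also have "1 + \<tau>^2 = (1 / cos \<alpha>)^2" unfolding \<tau>_def using sec_sq[OF cpos] .
    finally show ?thesis unfolding a_def .
  qed
qed

lemma inv_props:
  assumes "invertible (M::'a::semiring_1^'n^'n)"
  shows "M ** matrix_inv M = mat 1" "matrix_inv M ** M = mat 1"
proof -
  have "\<exists>M'. M ** M' = mat 1 \<and> M' ** M = mat 1" using assms unfolding invertible_def by blast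
  hence "M ** matrix_inv M = mat 1 \<and> matrix_inv M ** M = mat 1"
    unfolding matrix_inv_def by (rule someI_ex)
  thus "M ** matrix_inv M = mat 1" "matrix_inv M ** M = mat 1" by auto
qed

lemma inj_invertible:
  assumes "\<And>y. (M::complex^'n^'n) *v y = 0 \<Longrightarrow> y = 0"
  shows "invertible M"
proof -
  have "\<exists>B. B ** M = mat 1" using assms matrix_left_invertible_ker by blast
  thus ?thesis using invertible_left_inverse by blast
qed

lemma sector_invertible:
  assumes A: "A \<in> Pi_sa \<alpha>" shows "invertible A"
proof (rule inj_invertible)
  fix y assume "A *v y = 0"
  hence "Re (cinner (A *v y) y) = 0" by simp
  thus "y = 0" using sector_form(3)[OF A, of y] by auto
qed

lemma KL:
  assumes A: "A \<in> Pi_sa \<alpha>" and a0: "0 \<le> \<alpha>" and a1: "\<alpha> < pi / 2"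
    and W: "\<And>x. cmod (cinner (A *v x) x) \<le> W * (norm x)^2" and W0: "W > 0"
  shows "(norm (A *v u))^2 \<le> (1 / cos \<alpha>)^2 * Re (cinner (A *v u) u) * W"
proof -
  define y where "y = A *v u"
  have hu: "Re (cinner (A *v u) u) \<ge> 0" using sector_form(1)[OF A] .
  have "(norm y)^2 = Re (cinner (A *v u) y)" by (simp add: y_def cinner_self_Re)
  also have "\<dots> \<le> cmod (cinner (A *v u) y)" by (rule complex_Re_le_cmod)
  finally have n1: "(norm y)^2 \<le> cmod (cinner (A *v u) y)" .
  have "((norm y)^2)^2 \<le> (cmod (cinner (A *v u) y))^2"
    using n1 by (intro power_mono) auto
  also have "\<dots> \<le> (1 / cos \<alpha>)^2 * (Re (cinner (A *v u) u) * Re (cinner (A *v y) y))"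
    by (rule sector_cs[OF A a0 a1])
  also have "\<dots> \<le> (1 / cos \<alpha>)^2 * (Re (cinner (A *v u) u) * (W * (norm y)^2))"
  proof -
    have "Re (cinner (A *v y) y) \<le> W * (norm y)^2"
      using complex_Re_le_cmod[of "cinner (A *v y) y"] W[of y] by linarith
    thus ?thesis using hu by (intro mult_left_mono) auto
  qed
  finally have "((norm y)^2) * (norm y)^2 \<le> ((1 / cos \<alpha>)^2 * Re (cinner (A *v u) u) * W) * (norm y)^2"
    by (simp add: power2_eq_square mult_ac)
  thus ?thesis
  proof (cases "norm y = 0")
    case True thus ?thesis using hu W0 y_def by simp
  next
    case False
    hence "(norm y)^2 > 0" by simp
    thus ?thesis using mult_right_le_imp_le[OF \<open>((norm y)^2) * (norm y)^2 \<le> _\<close>] y_def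
      by simp
  qed
qed

lemma resolvent_bound:
  assumes A: "A \<in> Pi_sa \<alpha>" and B: "B \<in> Pi_sa \<alpha>" and a0: "0 \<le> \<alpha>" and a1: "\<alpha> < pi / 2"
    and WA: "\<And>x. cmod (cinner (A *v x) x) \<le> WA * (norm x)^2" and WA0: "WA > 0"
    and WB: "\<And>x. cmod (cinner (B *v x) x) \<le> WB * (norm x)^2" and WB0: "WB > 0"
    and l0: "l \<ge> 0"
  shows "norm (matrix_inv (matrix_inv A + l *\<^sub>R matrix_inv B) *v x)
           \<le> (1 / cos \<alpha>)^2 * (WA * WB / (WB + l * WA)) * norm x"
proof -
  define N where "N = matrix_inv A + l *\<^sub>R matrix_inv B"
  have cpos: "cos \<alpha> > 0" using a0 a1 by (intro cos_gt_zero_pi) auto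
  define D where "D = 1 / WA + l / WB"
  have D0: "D > 0" unfolding D_def using WA0 WB0 l0 by (simp add: add_pos_nonneg)
  have invA: "invertible A" by (rule sector_invertible[OF A])
  have invB: "invertible B" by (rule sector_invertible[OF B])
  have partA: "(cos \<alpha>)^2 * (norm y)^2 / WA \<le> Re (cinner (matrix_inv A *v y) y)" for y
  proof -
    define u where "u = matrix_inv A *v y"
    have Au: "A *v u = y" unfolding u_def
      by (simp add: matrix_vector_mul_assoc inv_props(1)[OF invA])
    have "cinner u y = cnj (cinner (A *v u) u)"
      by (simp add: cinner_commute flip: Au)
    hence "Re (cinner (matrix_inv A *v y) y) = Re (cinner (A *v u) u)" by (simp add: u_def)
    moreover have "(norm y)^2 \<le> (1 / cos \<alpha>)^2 * Re (cinner (A *v u) u) * WA"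
      using KL[OF A a0 a1 WA WA0, of u] Au by simp
    ultimately show ?thesis using cpos WA0 by (simp add: field_simps power2_eq_square)
  qed
  have partB: "(cos \<alpha>)^2 * (norm y)^2 / WB \<le> Re (cinner (matrix_inv B *v y) y)" for y
  proof -
    define u where "u = matrix_inv B *v y"
    have Bu: "B *v u = y" unfolding u_def
      by (simp add: matrix_vector_mul_assoc inv_props(1)[OF invB])
    have "cinner u y = cnj (cinner (B *v u) u)"
      by (simp add: cinner_commute flip: Bu)
    hence "Re (cinner (matrix_inv B *v y) y) = Re (cinner (B *v u) u)" by (simp add: u_def)
    moreover have "(norm y)^2 \<le> (1 / cos \<alpha>)^2 * Re (cinner (B *v u) u) * WB"
      using KL[OF B a0 a1 WB WB0, of u] Bu by simp
    ultimately show ?thesis using cpos WB0 by (simp add: field_simps power2_eq_square)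
  qed
  have core: "(cos \<alpha>)^2 * D * (norm y)^2 \<le> Re (cinner (N *v y) y)" for y
  proof -
    have "Re (cinner (N *v y) y) = Re (cinner (matrix_inv A *v y) y) + l * Re (cinner (matrix_inv B *v y) y)"
      unfolding N_def by (simp add: matrix_vector_mult_add_rdistrib scaleR_mv cinner_add_left cinner_scaleR_left)
    moreover have "l * ((cos \<alpha>)^2 * (norm y)^2 / WB) \<le> l * Re (cinner (matrix_inv B *v y) y)"
      using partB[of y] l0 by (rule mult_left_mono)
    ultimately show ?thesis using partA[of y] unfolding D_def by (simp add: field_simps)
  qed
  have invN: "invertible N"
  proof (rule inj_invertible)
    fix y assume "N *v y = 0"
    hence "(cos \<alpha>)^2 * D * (norm y)^2 \<le> 0" using core[of y] by simp
    moreover have "(cos \<alpha>)^2 * D > 0" using cpos D0 by simp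
    ultimately have "(norm y)^2 \<le> 0"
      by (metis mult_le_0_iff not_less zero_le_power2)
    thus "y = 0" by simp
  qed
  define y where "y = matrix_inv N *v x"
  have Ny: "N *v y = x" unfolding y_def by (simp add: matrix_vector_mul_assoc inv_props(1)[OF invN])
  have "(cos \<alpha>)^2 * D * (norm y)^2 \<le> norm x * norm y"
    using core[of y] Ny complex_Re_le_cmod[of "cinner x y"] cinner_cs[of x y] by simp
  hence "(cos \<alpha>)^2 * D * norm y \<le> norm x"
  proof (cases "norm y = 0")
    case False
    hence "norm y > 0" by simp
    with \<open>(cos \<alpha>)^2 * D * (norm y)^2 \<le> norm x * norm y\<close> show ?thesis
      by (simp add: power2_eq_square mult.assoc[symmetric] mult_le_cancel_right)
  qed simp
  hence "norm y \<le> norm x / ((cos \<alpha>)^2 * D)" using cpos D0 by (simp add: field_simps)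
  also have "norm x / ((cos \<alpha>)^2 * D) = (1 / cos \<alpha>)^2 * (WA * WB / (WB + l * WA)) * norm x"
    unfolding D_def using cpos WA0 WB0 l0 by (simp add: field_simps power2_eq_square)
  finally show ?thesis unfolding y_def N_def .
qed

lemma Phi_linear: "linear (\<lambda>M::complex^'n^'n. cinner (M *v x) y)"
proof (rule linearI)
  fix M M' :: "complex^'n^'n"
  show "cinner ((M + M') *v x) y = cinner (M *v x) y + cinner (M' *v x) y"
    by (simp add: matrix_vector_mult_add_rdistrib cinner_add_left)
next
  fix r :: real and M :: "complex^'n^'n"
  show "cinner ((r *\<^sub>R M) *v x) y = r *\<^sub>R cinner (M *v x) y"
    by (simp only: scaleR_mv cinner_scaleR_left) (simp add: scaleR_conv_of_real)
qed

lemma Phi_bl: "bounded_linear (\<lambda>M::complex^'n^'n. cinner (M *v x) y)"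
  using Phi_linear linear_conv_bounded_linear by blast

lemma Phi_scaleR: "cinner ((r *\<^sub>R M) *v x) y = of_real r * cinner (M *v x) y"
  by (simp add: scaleR_mv cinner_scaleR_left)

lemma wg_bound:
  assumes A: "A \<in> Pi_sa \<alpha>" and B: "B \<in> Pi_sa \<alpha>" and a0: "0 \<le> \<alpha>" and a1: "\<alpha> < pi / 2"
    and WA: "\<And>x. cmod (cinner (A *v x) x) \<le> WA * (norm x)^2" and WA0: "WA > 0"
    and WB: "\<And>x. cmod (cinner (B *v x) x) \<le> WB * (norm x)^2" and WB0: "WB > 0"
    and s0: "0 < s" and s1: "s < 1"
  shows "cmod (cinner (wgmean s A B *v x) y)
           \<le> (1 / cos \<alpha>)^2 * (WA powr (1 - s) * WB powr s) * (norm x * norm y)"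
proof -
  define \<Phi> where "\<Phi> = (\<lambda>M. cinner (M *v x) y)"
  have bl: "bounded_linear \<Phi>" unfolding \<Phi>_def by (rule Phi_bl)
  define F where "F = (\<lambda>l::real. (l powr (s - 1)) *\<^sub>R
        matrix_inv (matrix_inv A + l *\<^sub>R matrix_inv B))"
  define C where "C = (1 / cos \<alpha>)^2 * (norm x * norm y)"
  have C0: "C \<ge> 0" unfolding C_def by simp
  define X where "X = WA powr (1 - s) * WB powr s"
  define g where "g = (\<lambda>l::real. l powr (s - 1) * (WA * WB / (WB + l * WA)) * C)"
  have gint: "(g has_integral (pi / sin (s * pi) * X) * C) {0<..}"
    unfolding g_def X_def by (rule has_integral_mult_left[OF key_integral[OF s0 s1 WA0 WB0]])
  have spos: "sin (s * pi) > 0" using s0 s1 by (intro sin_gt_zero) auto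
  have X0: "X \<ge> 0" unfolding X_def by simp
  have pt: "norm (\<Phi> (F l)) \<le> g l" if "l \<in> {0<..}" for l
  proof -
    have l0: "l > 0" using that by simp
    have "\<Phi> (F l) = of_real (l powr (s - 1)) * \<Phi> (matrix_inv (matrix_inv A + l *\<^sub>R matrix_inv B))"
      unfolding F_def \<Phi>_def by (rule Phi_scaleR)
    hence eq: "norm (\<Phi> (F l)) = l powr (s - 1) * cmod (\<Phi> (matrix_inv (matrix_inv A + l *\<^sub>R matrix_inv B)))"
      by (simp add: norm_mult)
    have "cmod (\<Phi> (matrix_inv (matrix_inv A + l *\<^sub>R matrix_inv B)))
        \<le> norm (matrix_inv (matrix_inv A + l *\<^sub>R matrix_inv B) *v x) * norm y"
      unfolding \<Phi>_def by (rule cinner_cs)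
    also have "\<dots> \<le> ((1 / cos \<alpha>)^2 * (WA * WB / (WB + l * WA)) * norm x) * norm y"
      by (intro mult_right_mono resolvent_bound[OF A B a0 a1 WA WA0 WB WB0]) (use l0 in auto)
    finally have c1: "cmod (\<Phi> (matrix_inv (matrix_inv A + l *\<^sub>R matrix_inv B)))
        \<le> ((1 / cos \<alpha>)^2 * (WA * WB / (WB + l * WA)) * norm x) * norm y" .
    have "norm (\<Phi> (F l)) \<le> l powr (s - 1) * (((1 / cos \<alpha>)^2 * (WA * WB / (WB + l * WA)) * norm x) * norm y)"
      unfolding eq by (rule mult_left_mono[OF c1]) simp
    thus ?thesis unfolding g_def C_def by (simp add: mult_ac)
  qed
  have I: "cmod (\<Phi> (integral {0<..} F)) \<le> (pi / sin (s * pi) * X) * C"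
  proof (cases "F integrable_on {0<..}")
    case True
    have "\<Phi> (integral {0<..} F) = integral {0<..} (\<Phi> \<circ> F)"
      using integral_linear[OF True bl] by simp
    also have "cmod \<dots> \<le> integral {0<..} g"
      using integral_norm_bound_integral[OF integrable_linear[OF True bl]] gint pt
      by (simp add: has_integral_integrable)
    also have "integral {0<..} g = (pi / sin (s * pi) * X) * C" using gint by (rule integral_unique)
    finally show ?thesis .
  next
    case False
    hence "integral {0<..} F = 0" by (rule not_integrable_integral)
    thus ?thesis unfolding \<Phi>_def using spos X0 C0 by simp
  qed
  have "wgmean s A B = (sin (s * pi) / pi) *\<^sub>R integral {0<..} F"
    unfolding wgmean_def F_def ..
  hence "\<Phi> (wgmean s A B) = of_real (sin (s * pi) / pi) * \<Phi> (integral {0<..} F)"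
    unfolding \<Phi>_def by (simp add: Phi_scaleR)
  hence "cmod (\<Phi> (wgmean s A B)) = (sin (s * pi) / pi) * cmod (\<Phi> (integral {0<..} F))"
    using spos by (simp only: norm_mult norm_of_real) simp
  also have "\<dots> \<le> (sin (s * pi) / pi) * ((pi / sin (s * pi) * X) * C)"
    using I spos by (intro mult_left_mono) auto
  also have "\<dots> = X * C" using spos by simp
  finally show ?thesis unfolding \<Phi>_def X_def C_def by (simp add: mult_ac)
qed

lemma qn_upper:
  fixes M :: "complex^'n^'n"
  assumes ne: "\<exists>x y :: complex^'n. norm x = 1 \<and> norm y = 1 \<and> cinner x y = q"
    and bd: "\<And>x y. norm x = 1 \<Longrightarrow> norm y = 1 \<Longrightarrow> cinner x y = q \<Longrightarrow> cmod (cinner (M *v x) y) \<le> R"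
  shows "q_numrad q M \<le> R"
  unfolding q_numrad_def
proof (rule cSup_least)
  obtain x y :: "complex^'n" where xy: "norm x = 1" "norm y = 1" "cinner x y = q" using ne by blast
  have mem: "cmod (cinner (M *v x) y) \<in> {cmod (cinner (M *v x) y) | x y. norm x = 1 \<and> norm y = 1 \<and> cinner x y = q}"
    by (rule CollectI, rule exI[of _ x], rule exI[of _ y]) (simp add: xy)
  show "{cmod (cinner (M *v x) y) |x y. norm x = 1 \<and> norm y = 1 \<and> cinner x y = q} \<noteq> {}"
    using mem by auto
next
  fix r assume "r \<in> {cmod (cinner (M *v x) y) |x y. norm x = 1 \<and> norm y = 1 \<and> cinner x y = q}"
  then obtain x y where r: "r = cmod (cinner (M *v x) y)" and xy: "norm x = 1" "norm y = 1" "cinner x y = q"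
    by blast
  show "r \<le> R" unfolding r by (rule bd[OF xy])
qed

lemma qn_lower:
  fixes M :: "complex^'n^'n"
  assumes "norm x = 1" "norm y = 1" "cinner x y = q"
  shows "cmod (cinner (M *v x) y) \<le> q_numrad q M"
proof -
  obtain K where K: "\<And>x. norm (M *v x) \<le> norm x * K"
    using bounded_linear.bounded[OF matrix_vector_mul_bounded_linear[of M]] by blast
  have bdd: "bdd_above {cmod (cinner (M *v x) y) | x y. norm x = 1 \<and> norm y = 1 \<and> cinner x y = q}"
  proof (rule bdd_aboveI[of _ K])
    fix r assume "r \<in> {cmod (cinner (M *v x) y) | x y. norm x = 1 \<and> norm y = 1 \<and> cinner x y = q}"
    then obtain x y where r: "r = cmod (cinner (M *v x) y)" "norm x = 1" "norm y = 1" by blast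
    have "r \<le> norm (M *v x) * norm y" using r cinner_cs[of "M *v x" y] by simp
    also have "\<dots> \<le> K" using K[of x] r by simp
    finally show "r \<le> K" .
  qed
  have mem: "cmod (cinner (M *v x) y) \<in> {cmod (cinner (M *v x) y) | x y. norm x = 1 \<and> norm y = 1 \<and> cinner x y = q}"
    by (rule CollectI, rule exI[of _ x], rule exI[of _ y]) (simp add: assms)
  show ?thesis unfolding q_numrad_def by (rule cSup_upper[OF mem bdd])
qed

lemma two_idx:
  assumes "CARD('n::finite) \<ge> 2"
  shows "\<exists>i j::'n. i \<noteq> j"
proof (rule ccontr)
  assume "\<not> ?thesis"
  hence all: "\<And>i j::'n. i = j" by blast
  obtain i :: 'n where True by simp
  have U: "(UNIV::'n set) = {i}" using all by auto
  have "CARD('n) = card {i}" by (simp only: U)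
  hence "CARD('n) = 1" by simp
  thus False using assms by simp
qed

lemma cinner_axis_left: "cinner (axis i c) y = c * cnj (y $ i)"
proof -
  have "cinner (axis i c) y = (\<Sum>k\<in>UNIV. if k = i then c * cnj (y $ k) else 0)"
    unfolding cinner_def axis_def by (rule sum.cong) auto
  thus ?thesis by simp
qed

lemma cinner_axis_right: "cinner y (axis i c) = y $ i * cnj c"
proof -
  have "cinner y (axis i c) = cnj (cinner (axis i c) y)" by (simp add: cinner_commute)
  thus ?thesis by (simp add: cinner_axis_left)
qed

lemma norm_axis_c: "norm (axis i (c::complex) :: complex^'n) = cmod c"
proof -
  have "(norm (axis i c :: complex^'n))^2 = (\<Sum>k\<in>UNIV. if k = i then (cmod c)^2 else 0)"
    unfolding norm_sq_vec axis_def by (rule sum.cong) auto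
  hence "(norm (axis i c :: complex^'n))^2 = (cmod c)^2" by simp
  thus ?thesis by (simp add: power2_eq_iff_nonneg)
qed

lemma norm_comb:
  assumes "norm v = 1" "norm z = 1" "cinner v z = 0"
  shows "(norm (a *s v + b *s z))^2 = (cmod a)^2 + (cmod b)^2"
proof -
  have vz: "cinner z v = 0" using assms(3) cinner_commute[of v z] by simp
  have "complex_of_real ((norm (a *s v + b *s z))^2) = cinner (a *s v + b *s z) (a *s v + b *s z)"
    by (simp add: cinner_self)
  also have "\<dots> = a * cnj a * cinner v v + b * cnj b * cinner z z"
    using assms(3) vz by (simp add: cinner_add_left cinner_add_right cinner_scale_left cinner_scale_right)
  also have "\<dots> = complex_of_real ((cmod a)^2 + (cmod b)^2)"
    using assms by (simp add: cinner_self mult_cnj_self1)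
  finally show ?thesis by (simp only: of_real_eq_iff)
qed

lemma unit_pair:
  assumes n2: "CARD('n::finite) \<ge> 2" and q1: "cmod q \<le> 1"
  shows "\<exists>x y :: complex^'n. norm x = 1 \<and> norm y = 1 \<and> cinner x y = q"
proof -
  obtain i j :: 'n where ij: "i \<noteq> j" using two_idx[OF n2] by blast
  define r where "r = sqrt (1 - (cmod q)^2)"
  have qq: "(cmod q)^2 \<le> 1^2" by (rule power_mono[OF q1]) simp
  have r2: "r^2 = 1 - (cmod q)^2" unfolding r_def by (rule real_sqrt_pow2) (use qq in simp)
  define v :: "complex^'n" where "v = axis i 1"
  define z :: "complex^'n" where "z = axis j 1"
  have nv: "norm v = 1" and nz: "norm z = 1" unfolding v_def z_def by (simp_all add: norm_axis_c)
  have vz: "cinner v z = 0" unfolding v_def z_def cinner_axis_left using ij by (simp add: axis_def)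
  define y where "y = cnj q *s v + complex_of_real r *s z"
  have "(norm y)^2 = 1" unfolding y_def using norm_comb[OF nv nz vz] r2 by simp
  hence "sqrt ((norm y)^2) = 1" by simp
  hence ny: "norm y = 1" by simp
  have "cinner v y = q" unfolding y_def
    using vz nv by (simp add: cinner_add_right cinner_scale_right cinner_self)
  thus ?thesis using nv ny by blast
qed

lemma orth_exists:
  assumes n2: "CARD('n::finite) \<ge> 2" and nv: "norm (v::complex^'n) = 1"
  shows "\<exists>z :: complex^'n. norm z = 1 \<and> cinner v z = 0"
proof -
  obtain i j :: 'n where ij: "i \<noteq> j" using two_idx[OF n2] by blast
  define w where "w k = axis k 1 - cnj (v $ k) *s v" for k
  have vv: "cinner v v = 1" using nv by (simp add: cinner_self)
  have ow: "cinner v (w k) = 0" for k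
    unfolding w_def by (simp add: cinner_diff_right cinner_scale_right cinner_axis_right vv)
  have "\<exists>k. w k \<noteq> 0"
  proof (rule ccontr)
    assume "\<not> ?thesis"
    hence wi: "w i = 0" and wj: "w j = 0" by auto
    have c1: "1 - cnj (v $ i) * v $ i = 0" using arg_cong[OF wi, of "\<lambda>u. u $ i"] unfolding w_def by simp
    have c2: "0 - cnj (v $ j) * v $ i = 0" using arg_cong[OF wj, of "\<lambda>u. u $ i"] ij unfolding w_def
      by (simp add: axis_def)
    have c3: "1 - cnj (v $ j) * v $ j = 0" using arg_cong[OF wj, of "\<lambda>u. u $ j"] unfolding w_def by simp
    from c1 have "v $ i \<noteq> 0" by auto
    with c2 have "v $ j = 0" by simp
    with c3 show False by simp
  qed
  then obtain k where wk: "w k \<noteq> 0" by blast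
  define z where "z = (1 / norm (w k)) *\<^sub>R w k"
  have "norm z = 1" unfolding z_def using wk by simp
  moreover have "cinner v z = 0" unfolding z_def by (simp add: cinner_scaleR_right ow)
  ultimately show ?thesis by blast
qed

lemma qn_lower_diag:
  fixes M :: "complex^'n^'n"
  assumes n2: "CARD('n) \<ge> 2" and q1: "cmod q \<le> 1" and nv: "norm v = 1"
  shows "cmod q * cmod (cinner (M *v v) v) \<le> q_numrad q M"
proof -
  obtain z where nz: "norm z = 1" and vz: "cinner v z = 0" using orth_exists[OF n2 nv] by blast
  define r where "r = sqrt (1 - (cmod q)^2)"
  have qq: "(cmod q)^2 \<le> 1^2" by (rule power_mono[OF q1]) simp
  have r2: "r^2 = 1 - (cmod q)^2" unfolding r_def by (rule real_sqrt_pow2) (use qq in simp)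
  define y where "y \<sigma> = cnj q *s v + complex_of_real (\<sigma> * r) *s z" for \<sigma> :: real
  have ny: "norm (y \<sigma>) = 1" if "\<bar>\<sigma>\<bar> = 1" for \<sigma>
  proof -
    have s2: "\<sigma>^2 = 1" using that power2_abs[of \<sigma>] by simp
    have "(cmod (complex_of_real (\<sigma> * r)))^2 = r^2" using s2 by (simp only: norm_mult norm_of_real) (simp add: power_mult_distrib)
    hence "(norm (y \<sigma>))^2 = 1" unfolding y_def using norm_comb[OF nv nz vz] r2 by simp
    hence "sqrt ((norm (y \<sigma>))^2) = 1" by simp
    thus ?thesis by simp
  qed
  have vv: "cinner v v = 1" using nv by (simp add: cinner_self)
  have qy: "cinner v (y \<sigma>) = q" for \<sigma>
    unfolding y_def using vz vv by (simp add: cinner_add_right cinner_scale_right)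
  define a where "a = cinner (M *v v) v"
  define b where "b = cinner (M *v v) z"
  have val: "cinner (M *v v) (y \<sigma>) = q * a + complex_of_real (\<sigma> * r) * b" for \<sigma>
    unfolding y_def a_def b_def by (simp add: cinner_add_right cinner_scale_right)
  have b1: "cmod (q * a + complex_of_real r * b) \<le> q_numrad q M"
    using qn_lower[OF nv ny[of 1] qy[of 1], of M] val[of 1] by simp
  have b2: "cmod (q * a - complex_of_real r * b) \<le> q_numrad q M"
    using qn_lower[OF nv ny[of "-1"] qy[of "-1"], of M] val[of "-1"] by simp
  have e: "(q * a + complex_of_real r * b) + (q * a - complex_of_real r * b) = 2 * (q * a)"
    by (simp add: algebra_simps)
  have "2 * cmod (q * a) = cmod ((q * a + complex_of_real r * b) + (q * a - complex_of_real r * b))"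
    unfolding e by (simp only: norm_mult) simp
  also have "\<dots> \<le> cmod (q * a + complex_of_real r * b) + cmod (q * a - complex_of_real r * b)"
    by (rule norm_triangle_ineq)
  finally have "2 * cmod (q * a) \<le> 2 * q_numrad q M" using b1 b2 by linarith
  hence "cmod (q * a) \<le> q_numrad q M" by simp
  thus ?thesis unfolding a_def by (simp only: norm_mult)
qed

lemma W_bound:
  fixes M :: "complex^'n^'n"
  assumes n2: "CARD('n) \<ge> 2" and q1: "cmod q \<le> 1" and q0: "0 < cmod q"
  shows "cmod (cinner (M *v x) x) \<le> (q_numrad q M / cmod q) * (norm x)^2"
proof (cases "x = 0")
  case True thus ?thesis by simp
next
  case False
  define r where "r = 1 / norm x"
  have r0: "r > 0" using False by (simp add: r_def)
  define v where "v = r *\<^sub>R x"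
  have nv: "norm v = 1" using False by (simp add: v_def r_def)
  have "cinner (M *v v) v = of_real (r * r) * cinner (M *v x) x"
    unfolding v_def by (simp add: mv_scaleR cinner_scaleR_left cinner_scaleR_right)
  hence cv: "cmod (cinner (M *v v) v) = r * r * cmod (cinner (M *v x) x)"
    using r0 by (simp add: norm_mult)
  have "cmod q * (r * r * cmod (cinner (M *v x) x)) \<le> q_numrad q M"
    using qn_lower_diag[OF n2 q1 nv, of M] cv by simp
  hence "r * r * cmod (cinner (M *v x) x) \<le> q_numrad q M / cmod q"
    using q0 by (simp add: field_simps)
  hence "cmod (cinner (M *v x) x) * (r * r) \<le> q_numrad q M / cmod q" by (simp add: mult_ac)
  hence "cmod (cinner (M *v x) x) \<le> (q_numrad q M / cmod q) / (r * r)"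
    using r0 by (metis pos_le_divide_eq mult_pos_pos)
  also have "(q_numrad q M / cmod q) / (r * r) = (q_numrad q M / cmod q) * (norm x)^2"
    unfolding r_def using False by (simp add: power2_eq_square)
  finally show ?thesis .
qed

lemma qn_pos:
  fixes A :: "complex^'n^'n"
  assumes A: "A \<in> Pi_sa \<alpha>" and n2: "CARD('n) \<ge> 2" and q1: "cmod q \<le> 1" and q0: "0 < cmod q"
  shows "q_numrad q A > 0"
proof -
  obtain i :: 'n where True by simp
  define e :: "complex^'n" where "e = axis i 1"
  have ne: "norm e = 1" unfolding e_def by (simp add: norm_axis_c)
  hence "e \<noteq> 0" by auto
  hence "Re (cinner (A *v e) e) > 0" by (rule sector_form(3)[OF A])
  hence "cmod (cinner (A *v e) e) > 0" using complex_Re_le_cmod[of "cinner (A *v e) e"] by linarith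
  hence "cmod q * cmod (cinner (A *v e) e) > 0" using q0 by simp
  thus ?thesis using qn_lower_diag[OF n2 q1 ne, of A] q1 by linarith
qed

lemma powr_div_id:
  fixes a b c s :: real
  assumes "a > 0" "b > 0" "c > 0"
  shows "(a / c) powr (1 - s) * (b / c) powr s = a powr (1 - s) * b powr s / c"
proof -
  have "(a / c) powr (1 - s) * (b / c) powr s = a powr (1 - s) * b powr s / (c powr (1 - s) * c powr s)"
    using assms by (simp add: powr_divide)
  also have "c powr (1 - s) * c powr s = c"
    using assms by (simp flip: powr_add)
  finally show ?thesis .
qed

lemma fin_ineq:
  fixes c S L Q :: real
  assumes "0 < c" "c \<le> 1" "S \<ge> 1" "L \<ge> 0" "Q \<le> S^2 / c * L"
  shows "c^2 * Q \<le> S^3 * L"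
proof -
  have "c^2 * Q \<le> c^2 * (S^2 / c * L)" using assms by (intro mult_left_mono) auto
  also have "\<dots> = c * (S^2 * L)" using assms by (simp add: power2_eq_square field_simps)
  also have "\<dots> \<le> 1 * (S^2 * L)" using assms by (intro mult_right_mono) auto
  also have "\<dots> \<le> S * (S^2 * L)" using assms by (intro mult_right_mono) auto
  also have "\<dots> = S^3 * L" by (simp add: power3_eq_cube power2_eq_square)
  finally show ?thesis .
qed

theorem mainTheorem12:
  fixes A B :: "complex^'n^'n" and q :: complex and \<alpha> t :: real
  assumes "CARD('n) \<ge> 2"
    and "0 \<le> \<alpha>" and "\<alpha> < pi / 2"
    and "A \<in> Pi_sa \<alpha>" and "B \<in> Pi_sa \<alpha>"
    and "0 < cmod q" and "cmod q \<le> 1"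
    and "0 < t" and "t < 1"
  shows "(cmod q)^2 * q_numrad q (log_mean A B)
           \<le> (1 / cos \<alpha>)^3 * log_mean_real (q_numrad q A) (q_numrad q B) \<and>
         (cmod q)^2 * q_numrad q (heinz_mean t A B)
           \<le> (1 / cos \<alpha>)^3 * heinz_mean_real t (q_numrad q A) (q_numrad q B)"
proof -
  note n2 = assms(1) and a0 = assms(2) and a1 = assms(3) and A = assms(4) and B = assms(5)
    and q0 = assms(6) and q1 = assms(7) and t0 = assms(8) and t1 = assms(9)
  have cpos: "cos \<alpha> > 0" using a0 a1 by (intro cos_gt_zero_pi) auto
  define S where "S = 1 / cos \<alpha>"
  have S1: "S \<ge> 1"
  proof -
    have "cos \<alpha> \<le> 1" by simp
    thus ?thesis unfolding S_def using cpos by (simp add: field_simps)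
  qed
  have ne: "\<exists>x y :: complex^'n. norm x = 1 \<and> norm y = 1 \<and> cinner x y = q"
    by (rule unit_pair[OF n2 q1])
  define a where "a = q_numrad q A"
  define b where "b = q_numrad q B"
  have apos: "a > 0" unfolding a_def by (rule qn_pos[OF A n2 q1 q0])
  have bpos: "b > 0" unfolding b_def by (rule qn_pos[OF B n2 q1 q0])
  define WA where "WA = a / cmod q"
  define WB where "WB = b / cmod q"
  have WA0: "WA > 0" unfolding WA_def using apos q0 by simp
  have WB0: "WB > 0" unfolding WB_def using bpos q0 by simp
  have WAb: "\<And>x. cmod (cinner (A *v x) x) \<le> WA * (norm x)^2"
    unfolding WA_def a_def by (rule W_bound[OF n2 q1 q0])
  have WBb: "\<And>x. cmod (cinner (B *v x) x) \<le> WB * (norm x)^2"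
    unfolding WB_def b_def by (rule W_bound[OF n2 q1 q0])
  define E where "E s = a powr (1 - s) * b powr s" for s
  have E0: "E s \<ge> 0" for s unfolding E_def by simp
  define K where "K = S^2 / cmod q"
  have K0: "K \<ge> 0" unfolding K_def using q0 by simp
  have Gb: "cmod (cinner (wgmean s A B *v x) y) \<le> K * E s"
    if s: "s \<in> {0..1}" and nx: "norm x = 1" and ny: "norm y = 1" for s x y
  proof (cases "s = 0 \<or> s = 1")
    case True
    hence "sin (s * pi) = 0" by auto
    hence "wgmean s A B = 0" unfolding wgmean_def by simp
    thus ?thesis using K0 E0[of s] by simp
  next
    case False
    hence s0: "0 < s" and s1: "s < 1" using s by auto
    have "cmod (cinner (wgmean s A B *v x) y) \<le> (1 / cos \<alpha>)^2 * (WA powr (1 - s) * WB powr s) * (norm x * norm y)"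
      by (rule wg_bound[OF A B a0 a1 WAb WA0 WBb WB0 s0 s1])
    also have "WA powr (1 - s) * WB powr s = E s / cmod q"
      unfolding WA_def WB_def E_def by (rule powr_div_id[OF apos bpos q0])
    finally show ?thesis using nx ny unfolding K_def S_def by simp
  qed
  have Econt: "continuous_on {0..1} E" unfolding E_def using apos bpos
    by (intro continuous_intros) auto
  have Eint: "E integrable_on {0..1}" by (rule integrable_continuous_interval[OF Econt])
  define L where "L = log_mean_real a b"
  have L_eq: "L = integral {0..1} E" unfolding L_def log_mean_real_def E_def ..
  have L0: "L \<ge> 0" unfolding L_eq by (rule integral_nonneg[OF Eint]) (simp add: E0)
  have partA: "q_numrad q (log_mean A B) \<le> S^2 / cmod q * L"
  proof (rule qn_upper[OF ne])
    fix x y :: "complex^'n" assume nx: "norm x = 1" and ny: "norm y = 1" and "cinner x y = q"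
    define \<Phi> where "\<Phi> = (\<lambda>M. cinner (M *v x) y)"
    have bl: "bounded_linear \<Phi>" unfolding \<Phi>_def by (rule Phi_bl)
    define G where "G = (\<lambda>s. wgmean s A B)"
    have gint: "(\<lambda>s. K * E s) integrable_on {0..1}" using Eint by (rule integrable_on_mult_right)
    have gval: "integral {0..1} (\<lambda>s. K * E s) = K * L" unfolding L_eq by simp
    have "cmod (\<Phi> (integral {0..1} G)) \<le> K * L"
    proof (cases "G integrable_on {0..1}")
      case True
      have "\<Phi> (integral {0..1} G) = integral {0..1} (\<Phi> \<circ> G)"
        using integral_linear[OF True bl] by simp
      also have "cmod \<dots> \<le> integral {0..1} (\<lambda>s. K * E s)"
        by (rule integral_norm_bound_integral[OF integrable_linear[OF True bl] gint])
           (use Gb nx ny in \<open>simp add: \<Phi>_def G_def\<close>)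
      finally show ?thesis by (simp only: gval)
    next
      case False
      hence "integral {0..1} G = 0" by (rule not_integrable_integral)
      thus ?thesis unfolding \<Phi>_def using K0 L0 by simp
    qed
    moreover have "log_mean A B = integral {0..1} G" unfolding log_mean_def G_def ..
    ultimately show "cmod (cinner (log_mean A B *v x) y) \<le> S^2 / cmod q * L"
      unfolding \<Phi>_def K_def by simp
  qed
  define H where "H = heinz_mean_real t a b"
  have H_eq: "H = (E t + E (1 - t)) / 2" unfolding H_def heinz_mean_real_def E_def by simp
  have H0: "H \<ge> 0" unfolding H_eq using E0[of t] E0[of "1 - t"] by simp
  have partB: "q_numrad q (heinz_mean t A B) \<le> S^2 / cmod q * H"
  proof (rule qn_upper[OF ne])
    fix x y :: "complex^'n" assume nx: "norm x = 1" and ny: "norm y = 1" and "cinner x y = q"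
    define u where "u = cinner (wgmean t A B *v x) y"
    define v where "v = cinner (wgmean (1 - t) A B *v x) y"
    have eq: "cinner (heinz_mean t A B *v x) y = of_real (1/2) * (u + v)"
      unfolding heinz_mean_def u_def v_def
      by (simp only: Phi_scaleR matrix_vector_mult_add_rdistrib cinner_add_left)
    have "cmod (cinner (heinz_mean t A B *v x) y) = (1/2) * cmod (u + v)"
      unfolding eq by (simp only: norm_mult norm_of_real) (simp?)
    also have "\<dots> \<le> (1/2) * (cmod u + cmod v)"
      by (intro mult_left_mono norm_triangle_ineq) simp
    also have "\<dots> = (1/2) * (cmod (cinner (wgmean t A B *v x) y) + cmod (cinner (wgmean (1 - t) A B *v x) y))"
      unfolding u_def v_def ..
    also have "\<dots> \<le> (1/2) * (K * E t + K * E (1 - t))"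
      using Gb[of t x y] Gb[of "1 - t" x y] t0 t1 nx ny by simp
    also have "\<dots> = S^2 / cmod q * H" unfolding H_eq K_def using q0 by (simp add: field_simps)
    finally show "cmod (cinner (heinz_mean t A B *v x) y) \<le> S^2 / cmod q * H" .
  qed
  have "(cmod q)^2 * q_numrad q (log_mean A B) \<le> S^3 * L"
    by (rule fin_ineq[OF q0 q1 S1 L0 partA])
  moreover have "(cmod q)^2 * q_numrad q (heinz_mean t A B) \<le> S^3 * H"
    by (rule fin_ineq[OF q0 q1 S1 H0 partB])
  ultimately show ?thesis unfolding S_def L_def H_def a_def b_def by simp
qed

end
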